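(* Let $\mu>0$ and $\lambda_1>0$, and consider the system $$\frac{dx}{dt}=\lambda_1\bigl(2\mu y-4\mu xy-2x^2-2xy+x\bigr),\qquad \frac{dy}{dt}=\lambda_1\bigl(\mu y-4\mu y^2-2xy-2y^2+y\bigr)$$ on the closed quadrangle $Q\subset\mathbb{R}^2$ defined by $y\ge x/2$, $y\ge 1/2-x$, $y\le 1/3$, $y\le 1/2-x/2$ (with vertices $(1/3,1/6)$, $(1/2,1/4)$, $(1/3,1/3)$, $(1/6,1/3)$). For each value of $\mu$, the system has a unique, globally attracting fixed point $\underline{x}_c(\mu)=(x_c(\mu),y_c(\mu))$ in $Q$. This fixed point lies on the edge $\partial Q_1=Q\cap\{y=x/2\}$. Moreover, the map $\mu\mapsto\underline{x}_c(\mu)$ is one-to-one and onto the interior of the edge $\partial Q_1$, and as $\mu$ grows from $0$ to $\infty$, $\underline{x}_c(\mu)$ changes monotonically between the two endpoints $(1/3,1/6)$ and $(1/2,1/4)$ of this edge.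
   Context: Here $x=V/N^{\star}$ and $y=F/N^{\star}$ are the inverse symbolic coordinates of a crack mosaic ($V$ nodes, $F$ faces, total corner degree $N^{\star}$), $Q$ is the domain of convex mosaics, and the parameter $\mu$ is the ratio of the rate of secondary cracking events to the rate of crack healing events. "Globally attracting in $Q$" means every solution starting in $Q$ converges to it as $t\to\infty$. *)

theory Defs
  imports "HOL-Analysis.Analysis"
begin

definition crack_field :: "real \<Rightarrow> real \<Rightarrow> real \<times> real \<Rightarrow> real \<times> real" where
  "crack_field mu lam1 p = (case p of (x, y) \<Rightarrow>
     (lam1 * (2*mu*y - 4*mu*x*y - 2*x^2 - 2*x*y + x),
      lam1 * (mu*y - 4*mu*y^2 - 2*x*y - 2*y^2 + y)))"

definition quadQ :: "(real \<times> real) set" where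
  "quadQ = {(x, y). y \<ge> x/2 \<and> y \<ge> 1/2 - x \<and> y \<le> 1/3 \<and> y \<le> 1/2 - x/2}"

definition edge1_interior :: "(real \<times> real) set" where
  "edge1_interior = {(x, y). y = x/2 \<and> 1/3 < x \<and> x < 1/2}"

definition is_solution :: "real \<Rightarrow> real \<Rightarrow> (real \<Rightarrow> real \<times> real) \<Rightarrow> bool" where
  "is_solution mu lam1 phi \<longleftrightarrow>
     (\<forall>t\<ge>0. (phi has_vector_derivative crack_field mu lam1 (phi t)) (at t within {0..}))"

end

theory Submission
  imports Defs "HOL-Real_Asymp.Real_Asymp"
begin

lemma vd_fst: "(phi has_vector_derivative v) F \<Longrightarrow> ((\<lambda>t. fst (phi t)) has_real_derivative fst v) F"
  unfolding has_real_derivative_iff_has_vector_derivative has_vector_derivative_def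
  by (drule has_derivative_fst) simp

lemma vd_snd: "(phi has_vector_derivative v) F \<Longrightarrow> ((\<lambda>t. snd (phi t)) has_real_derivative snd v) F"
  unfolding has_real_derivative_iff_has_vector_derivative has_vector_derivative_def
  by (drule has_derivative_snd) simp

lemma lin_ode:
  fixes f k :: "real \<Rightarrow> real"
  assumes d: "\<And>t. t \<ge> 0 \<Longrightarrow> (f has_real_derivative k t * f t) (at t within {0..})"
      and c: "continuous_on {0..} k" and t: "t \<ge> 0"
  shows "f t = f 0 * exp (integral {0..t} k)"
proof -
  let ?K = "\<lambda>s. integral {0..s} k"
  have ck: "continuous_on {0..t} k" using continuous_on_subset[OF c] by auto
  have "\<forall>s\<in>{0..t}. ((\<lambda>s. f s * exp (- ?K s)) has_real_derivative 0) (at s within {0..t})"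
  proof
    fix s assume s: "s \<in> {0..t}"
    have fd: "(f has_real_derivative k s * f s) (at s within {0..t})"
      using has_field_derivative_subset[OF d[of s]] s by auto
    have Kd: "(?K has_real_derivative k s) (at s within {0..t})"
      using integral_has_real_derivative[OF ck s] .
    have "((\<lambda>s. f s * exp (- ?K s)) has_real_derivative (k s * f s) * exp (- ?K s) + f s * (exp (- ?K s) * (- k s))) (at s within {0..t})"
    proof -
      have ed: "((\<lambda>s. exp (- ?K s)) has_real_derivative exp (- ?K s) * (- k s)) (at s within {0..t})"
        using DERIV_exp[THEN DERIV_chain2, OF DERIV_minus[OF Kd]] by simp
      show ?thesis using DERIV_mult[OF fd ed] by simp
    qed
    then show "((\<lambda>s. f s * exp (- ?K s)) has_real_derivative 0) (at s within {0..t})"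
      by (rule DERIV_cong) (simp add: algebra_simps)
  qed
  then obtain C where C: "\<forall>s\<in>{0..t}. f s * exp (- ?K s) = C"
    using has_field_derivative_zero_constant[of "{0..t}" "\<lambda>s. f s * exp (- ?K s)"] by auto
  have "f t * exp (- ?K t) = f 0 * exp (- ?K 0)" using C[rule_format, of 0] C[rule_format, of t] t by simp
  then have "f t * exp (- ?K t) * exp (?K t) = f 0 * exp (?K t)" by simp
  then show ?thesis by (simp add: exp_minus field_simps)
qed

definition Zf :: "real \<Rightarrow> real \<Rightarrow> real \<Rightarrow> real \<Rightarrow> real \<Rightarrow> real" where
  "Zf mu lam z0 c t = exp (-lam*(mu+1)*t) * z0 + ((4*mu+6)/(mu+1)) * (1 - exp (-lam*(mu+1)*t))
     + 2*c*(exp (-lam*mu*t) - exp (-lam*(mu+1)*t))"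

lemma Zf_0: "Zf mu lam z0 c 0 = z0" by (simp add: Zf_def)

lemma Zf_deriv:
  assumes "mu > 0"
  shows "(Zf mu lam z0 c has_real_derivative
     (-lam*(mu+1)*Zf mu lam z0 c t + lam*((4*mu+6) + 2*c*exp (-lam*mu*t)))) (at t within S)"
proof -
  define q where "q = (4*mu+6)/(mu+1)"
  have h: "4*mu+6 = q*(mu+1)" unfolding q_def using assms by (simp add: field_simps)
  have e: "Zf mu lam z0 c = (\<lambda>t. exp (-lam*(mu+1)*t) * z0 + q * (1 - exp (-lam*(mu+1)*t))
     + 2*c*(exp (-lam*mu*t) - exp (-lam*(mu+1)*t)))"
    unfolding q_def Zf_def by auto
  show ?thesis
    unfolding h unfolding e
    by (auto intro!: derivative_eq_intros simp: algebra_simps)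
qed

lemma Zf_pos:
  assumes "mu > 0" "lam > 0" "t \<ge> 0" "z0 \<ge> 3" "c \<ge> -3/2"
  shows "Zf mu lam z0 c t > 0"
proof -
  define e1 where "e1 = exp (-lam*(mu+1)*t)"
  define e2 where "e2 = exp (-lam*mu*t)"
  define q where "q = (4*mu+6)/(mu+1)"
  have e1p: "e1 > 0" unfolding e1_def by simp
  have e12: "e1 \<le> e2" unfolding e1_def e2_def using assms by (simp add: mult_right_mono algebra_simps)
  have e2l: "e2 \<le> 1" unfolding e2_def using assms by simp
  have q4: "q \<ge> 4" unfolding q_def using assms by (simp add: field_simps)
  have "e1 \<le> 1" using e12 e2l by simp
  have h1: "e1 * z0 \<ge> e1 * 3" using assms e1p by (intro mult_left_mono) auto
  have h2: "q * (1 - e1) \<ge> 3 * (1 - e1)" using q4 \<open>e1 \<le> 1\<close> by (intro mult_right_mono) auto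
  have h3: "2*c*(e2 - e1) \<ge> (-3) * (e2 - e1)" using assms e12 by (intro mult_right_mono) auto
  have h2': "q * (1 - e1) \<ge> 3 - 3 * e1" using h2 by simp
  have h3': "2*c*(e2 - e1) \<ge> 3 * e1 - 3 * e2" using h3 by simp
  have "Zf mu lam z0 c t = e1 * z0 + q * (1 - e1) + 2*c*(e2 - e1)"
    unfolding Zf_def e1_def e2_def q_def by simp
  then show ?thesis using h1 h2' h3' e1p e2l by linarith
qed

lemma alg1:
  fixes Z e c lam mu :: real
  assumes "Z \<noteq> 0"
  shows "(c*(-lam*mu*e)*Z - (2+c*e)*(-lam*(mu+1)*Z + lam*((4*mu+6)+2*c*e)))/(Z*Z)
    = lam*(2*mu*(1/Z) - 4*mu*((2+c*e)/Z)*(1/Z) - 2*((2+c*e)/Z)^2 - 2*((2+c*e)/Z)*(1/Z) + (2+c*e)/Z)"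
  using assms by (simp add: field_simps power2_eq_square)

lemma alg2:
  fixes Z e c lam mu :: real
  assumes "Z \<noteq> 0"
  shows "(0*Z - 1*(-lam*(mu+1)*Z + lam*((4*mu+6)+2*c*e)))/(Z*Z)
    = lam*(mu*(1/Z) - 4*mu*(1/Z)^2 - 2*((2+c*e)/Z)*(1/Z) - 2*(1/Z)^2 + 1/Z)"
  using assms by (simp add: field_simps power2_eq_square)

lemma existence:
  assumes mu: "mu > 0" and lam: "lam > 0" and p: "p \<in> quadQ"
  shows "\<exists>phi. is_solution mu lam phi \<and> phi 0 = p"
proof -
  obtain x0 y0 where p0: "p = (x0, y0)" by (cases p)
  have Q: "y0 \<ge> x0/2" "y0 \<ge> 1/2 - x0" "y0 \<le> 1/3" "y0 \<le> 1/2 - x0/2"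
    using p unfolding p0 quadQ_def by auto
  have y0p: "y0 > 0" using Q by linarith
  define z0 where "z0 = 1/y0"
  define c where "c = (x0 - 2*y0)/y0"
  have z03: "z0 \<ge> 3" unfolding z0_def using Q y0p by (simp add: field_simps)
  have c3: "c \<ge> -3/2" unfolding c_def using Q y0p by (simp add: field_simps)
  define Z where "Z = Zf mu lam z0 c"
  define phi where "phi = (\<lambda>t. ((2 + c*exp (-lam*mu*t))/Z t, 1/Z t))"
  have "is_solution mu lam phi"
    unfolding is_solution_def
  proof (intro allI impI)
    fix t :: real assume t: "t \<ge> 0"
    have Zp: "Z t \<noteq> 0" using Zf_pos[OF mu lam t z03 c3] unfolding Z_def by simp
    have Zd: "(Z has_real_derivative (-lam*(mu+1)*Z t + lam*((4*mu+6) + 2*c*exp (-lam*mu*t)))) (at t within {0..})"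
      unfolding Z_def by (rule Zf_deriv[OF mu])
    have ed: "((\<lambda>t. 2 + c*exp (-lam*mu*t)) has_real_derivative c*(-lam*mu*exp (-lam*mu*t))) (at t within {0..})"
      by (auto intro!: derivative_eq_intros)
    have d1: "((\<lambda>t. (2 + c*exp (-lam*mu*t))/Z t) has_real_derivative
       (c*(-lam*mu*exp (-lam*mu*t))*Z t - (2 + c*exp (-lam*mu*t))*(-lam*(mu+1)*Z t + lam*((4*mu+6) + 2*c*exp (-lam*mu*t))))/(Z t * Z t)) (at t within {0..})"
      using DERIV_divide[OF ed Zd Zp] by simp
    have d2: "((\<lambda>t. 1/Z t) has_real_derivative
       (0*Z t - 1*(-lam*(mu+1)*Z t + lam*((4*mu+6) + 2*c*exp (-lam*mu*t))))/(Z t * Z t)) (at t within {0..})"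
      using DERIV_divide[OF DERIV_const[of "1::real"] Zd Zp] by simp
    show "(phi has_vector_derivative crack_field mu lam (phi t)) (at t within {0..})"
      unfolding phi_def crack_field_def
      using has_vector_derivative_Pair[OF d1[unfolded has_real_derivative_iff_has_vector_derivative]
          d2[unfolded has_real_derivative_iff_has_vector_derivative]]
      by (simp only: alg1[OF Zp] alg2[OF Zp] prod.case)
  qed
  moreover have "phi 0 = p"
    unfolding phi_def Z_def Zf_0 p0 z0_def c_def using y0p by (simp add: field_simps)
  ultimately show ?thesis by blast
qed

lemma exp_neg_lim: "(a::real) > 0 \<Longrightarrow> ((\<lambda>t::real. exp (-a*t)) \<longlongrightarrow> 0) at_top"
  by real_asymp

lemma Zf_lim:
  assumes "mu > 0" "lam > 0"
  shows "(Zf mu lam z0 c \<longlongrightarrow> (4*mu+6)/(mu+1)) at_top"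
proof -
  have l1: "((\<lambda>t::real. exp (-(lam*(mu+1))*t)) \<longlongrightarrow> 0) at_top"
    using assms by (intro exp_neg_lim) simp
  have l2: "((\<lambda>t::real. exp (-(lam*mu)*t)) \<longlongrightarrow> 0) at_top"
    using assms by (intro exp_neg_lim) simp
  have "((\<lambda>t. exp (-(lam*(mu+1))*t) * z0 + ((4*mu+6)/(mu+1)) * (1 - exp (-(lam*(mu+1))*t))
     + 2*c*(exp (-(lam*mu)*t) - exp (-(lam*(mu+1))*t))) \<longlongrightarrow>
     0 * z0 + ((4*mu+6)/(mu+1)) * (1 - 0) + 2*c*(0 - 0)) at_top"
    by (intro tendsto_intros l1 l2)
  then show ?thesis unfolding Zf_def[abs_def] by simp
qed

lemma convergence:
  assumes mu: "mu > 0" and lam: "lam > 0" and sol: "is_solution mu lam phi" and p0: "phi 0 \<in> quadQ"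
  shows "(phi \<longlongrightarrow> ((mu+1)/(2*mu+3), (mu+1)/(4*mu+6))) at_top"
proof -
  define x where "x = (\<lambda>t. fst (phi t))"
  define y where "y = (\<lambda>t. snd (phi t))"
  have dphi: "\<And>t. t \<ge> 0 \<Longrightarrow> (phi has_vector_derivative crack_field mu lam (phi t)) (at t within {0..})"
    using sol unfolding is_solution_def by auto
  have cont: "continuous_on {0..} phi"
    unfolding continuous_on_eq_continuous_within
    using has_vector_derivative_continuous[OF dphi] by auto
  have cx: "continuous_on {0..} x" unfolding x_def by (intro continuous_on_fst cont)
  have cy: "continuous_on {0..} y" unfolding y_def by (intro continuous_on_snd cont)
  have dx: "\<And>t. t \<ge> 0 \<Longrightarrow> (x has_real_derivative lam*(2*mu*y t - 4*mu*x t*y t - 2*(x t)^2 - 2*x t*y t + x t)) (at t within {0..})"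
    using vd_fst[OF dphi] unfolding x_def y_def crack_field_def by (simp add: case_prod_beta)
  have dy: "\<And>t. t \<ge> 0 \<Longrightarrow> (y has_real_derivative lam*(mu*y t - 4*mu*(y t)^2 - 2*x t*y t - 2*(y t)^2 + y t)) (at t within {0..})"
    using vd_snd[OF dphi] unfolding x_def y_def crack_field_def by (simp add: case_prod_beta)
  obtain x0 y0 where xy0: "x 0 = x0" "y 0 = y0" by blast
  have Q: "y0 \<ge> x0/2" "y0 \<ge> 1/2 - x0" "y0 \<le> 1/3" "y0 \<le> 1/2 - x0/2"
    using p0 xy0 unfolding quadQ_def x_def y_def by (auto simp: case_prod_beta)
  have y0p: "y0 > 0" using Q by linarith
  define k where "k = (\<lambda>t. lam*(mu + 1 - 2*x t - 2*y t - 4*mu*y t))"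
  have ck: "continuous_on {0..} k" unfolding k_def by (intro continuous_intros cx cy)
  have ypos: "y t > 0" if t: "t \<ge> 0" for t
  proof -
    have "y t = y 0 * exp (integral {0..t} k)"
    proof (rule lin_ode[OF _ ck t])
      fix s :: real assume "s \<ge> 0"
      show "(y has_real_derivative k s * y s) (at s within {0..})"
        by (rule DERIV_cong[OF dy[OF \<open>s \<ge> 0\<close>]]) (simp add: k_def algebra_simps power2_eq_square)
    qed
    then show ?thesis using y0p xy0 by simp
  qed
  define c where "c = (x0 - 2*y0)/y0"
  define E where "E = (\<lambda>t. x t - 2*y t - c*exp (-lam*mu*t)*y t)"
  define k2 where "k2 = (\<lambda>t. lam*(1 - 2*x t - 2*y t - 4*mu*y t))"
  have ck2: "continuous_on {0..} k2" unfolding k2_def by (intro continuous_intros cx cy)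
  have E0: "\<And>t. t \<ge> 0 \<Longrightarrow> E t = 0"
  proof -
    fix t :: real assume t: "t \<ge> 0"
    have "E t = E 0 * exp (integral {0..t} k2)"
    proof (rule lin_ode[OF _ ck2 t])
      fix s :: real assume s: "s \<ge> 0"
      have e1: "((\<lambda>t. exp (-lam*mu*t)) has_real_derivative exp (-lam*mu * s) * (-lam*mu)) (at s within {0..})"
        by (auto intro!: derivative_eq_intros)
      note h = DERIV_diff[OF DERIV_diff[OF dx[OF s] DERIV_cmult[OF dy[OF s], of 2]] DERIV_mult[OF DERIV_cmult[OF e1, of c] dy[OF s]]]
      show "(E has_real_derivative k2 s * E s) (at s within {0..})"
        unfolding E_def
        using h by (rule DERIV_cong) (simp add: k2_def algebra_simps power2_eq_square)
    qed
    moreover have "E 0 = 0" unfolding E_def c_def using xy0 y0p by (simp add: field_simps)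
    ultimately show "E t = 0" by simp
  qed
  define Z where "Z = Zf mu lam (1/y0) c"
  define D where "D = (\<lambda>t. 1 / y t - Z t)"
  have D0: "\<And>t. t \<ge> 0 \<Longrightarrow> D t = 0"
  proof -
    fix t :: real assume t: "t \<ge> 0"
    have "D t = D 0 * exp (integral {0..t} (\<lambda>_. -lam*(mu+1)))"
    proof (rule lin_ode[OF _ _ t])
      show "continuous_on {0..} (\<lambda>_. -lam*(mu+1))" by (intro continuous_intros)
      fix s :: real assume s: "s \<ge> 0"
      have ys: "y s \<noteq> 0" using ypos[OF s] by simp
      have xs: "x s = 2*y s + c*exp (-lam*mu * s)*y s" using E0[OF s] unfolding E_def by simp
      have "(D has_real_derivative (0 * y s - 1 * (lam*(mu*y s - 4*mu*(y s)^2 - 2*x s*y s - 2*(y s)^2 + y s)))/(y s * y s)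
           - (-lam*(mu+1)*Z s + lam*((4*mu+6) + 2*c*exp (-lam*mu * s)))) (at s within {0..})"
        unfolding D_def Z_def
        by (intro DERIV_diff DERIV_divide[OF DERIV_const dy[OF s] ys] Zf_deriv mu)
      then show "(D has_real_derivative -lam*(mu+1) * D s) (at s within {0..})"
        by (rule DERIV_cong) (use ys in \<open>simp add: D_def xs field_simps power2_eq_square\<close>)
    qed
    moreover have "D 0 = 0" unfolding D_def Z_def Zf_0 using xy0 by simp
    ultimately show "D t = 0" by simp
  qed
  have ev: "\<forall>\<^sub>F t in at_top. ((2 + c*exp (-(lam*mu)*t))/Z t, 1/Z t) = phi t"
    using eventually_ge_at_top[of "0::real"]
  proof eventually_elim
    case (elim t)
    have ys: "y t \<noteq> 0" using ypos[OF elim] by simp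
    have xs: "x t = 2*y t + c*exp (-lam*mu*t)*y t" using E0[OF elim] unfolding E_def by simp
    have zt: "Z t = 1 / y t" using D0[OF elim] unfolding D_def by simp
    have "phi t = (x t, y t)" unfolding x_def y_def by simp
    then show ?case using ys by (simp add: zt xs field_simps)
  qed
  have L: "(Z \<longlongrightarrow> (4*mu+6)/(mu+1)) at_top" unfolding Z_def by (rule Zf_lim[OF mu lam])
  have Lnz: "(4*mu+6)/(mu+1) \<noteq> 0" using mu by simp
  have l2: "((\<lambda>t::real. exp (-(lam*mu)*t)) \<longlongrightarrow> 0) at_top"
    using mu lam by (intro exp_neg_lim) simp
  have "((\<lambda>t. ((2 + c*exp (-(lam*mu)*t))/Z t, 1/Z t)) \<longlongrightarrow>
      ((2 + c*0)/((4*mu+6)/(mu+1)), 1/((4*mu+6)/(mu+1)))) at_top"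
    by (intro tendsto_intros L l2 Lnz)
  moreover have "((2 + c*0)/((4*mu+6)/(mu+1)), 1/((4*mu+6)/(mu+1))) = ((mu+1)/(2*mu+3), (mu+1)/(4*mu+6))"
    using mu by (simp add: field_simps)
  ultimately show ?thesis using tendsto_cong[OF ev] by simp
qed

lemma uniq:
  assumes mu: "mu > 0" and lam: "lam > 0" and p: "p \<in> quadQ" and z: "crack_field mu lam p = (0, 0)"
  shows "p = ((mu+1)/(2*mu+3), (mu+1)/(4*mu+6))"
proof -
  obtain a b where ab: "p = (a, b)" by (cases p)
  have Q: "b \<ge> a/2" "b \<ge> 1/2 - a" "b \<le> 1/3" "b \<le> 1/2 - a/2"
    using p unfolding ab quadQ_def by auto
  have bp: "b > 0" using Q by linarith
  have F: "2*mu*b - 4*mu*a*b - 2*a^2 - 2*a*b + a = 0" and G: "mu*b - 4*mu*b^2 - 2*a*b - 2*b^2 + b = 0"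
    using z lam unfolding ab crack_field_def by auto
  have fac: "(a - 2*b) * (1 - 2*a - 2*b - 4*mu*b) = 0"
    using F G by (simp add: algebra_simps power2_eq_square)
  have "mu*b > 0" using bp mu by simp
  then have "1 - 2*a - 2*b - 4*mu*b < 0" using Q by linarith
  then have a2: "a = 2*b" using fac by simp
  have "b * (mu + 1 - (4*mu+6)*b) = 0" using G unfolding a2 by (simp add: algebra_simps power2_eq_square)
  then have "mu + 1 - (4*mu+6)*b = 0" using bp by simp
  then have bv: "b = (mu+1)/(4*mu+6)" using mu by (simp add: field_simps)
  show ?thesis unfolding ab a2 bv using mu by (simp add: field_simps)
qed

theorem proposition1:
  "\<exists>xc :: real \<Rightarrow> real \<times> real.
     (\<forall>mu > 0. \<forall>lam1 > 0.
        xc mu \<in> quadQ \<and> crack_field mu lam1 (xc mu) = (0, 0) \<and>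
        (\<forall>p \<in> quadQ. crack_field mu lam1 p = (0, 0) \<longrightarrow> p = xc mu) \<and>
        snd (xc mu) = fst (xc mu) / 2 \<and>
        (\<forall>p \<in> quadQ. \<exists>phi. is_solution mu lam1 phi \<and> phi 0 = p) \<and>
        (\<forall>phi. is_solution mu lam1 phi \<and> phi 0 \<in> quadQ \<longrightarrow> (phi \<longlongrightarrow> xc mu) at_top)) \<and>
     bij_betw xc {0<..} edge1_interior \<and>
     strict_mono_on {0<..} (\<lambda>mu. fst (xc mu)) \<and>
     strict_mono_on {0<..} (\<lambda>mu. snd (xc mu)) \<and>
     (xc \<longlongrightarrow> (1/3, 1/6)) (at_right 0) \<and>
     (xc \<longlongrightarrow> (1/2, 1/4)) at_top"
proof (rule exI[of _ "\<lambda>mu. ((mu+1)/(2*mu+3), (mu+1)/(4*mu+6))"], intro conjI allI impI ballI)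
  fix mu lam :: real assume mu: "mu > 0" and lam: "lam > 0"
  show "((mu+1)/(2*mu+3), (mu+1)/(4*mu+6)) \<in> quadQ"
  proof -
    define y where "y = (mu+1)/(4*mu+6)"
    have x: "(mu+1)/(2*mu+3) = 2*y" unfolding y_def using mu by (simp add: field_simps)
    have "y \<ge> 1/6" "y \<le> 1/4" unfolding y_def using mu by (simp_all add: field_simps)
    then show ?thesis unfolding quadQ_def x y_def[symmetric] by simp
  qed
  show "crack_field mu lam ((mu+1)/(2*mu+3), (mu+1)/(4*mu+6)) = (0, 0)"
  proof -
    define y where "y = (mu+1)/(4*mu+6)"
    have x: "(mu+1)/(2*mu+3) = 2*y" unfolding y_def using mu by (simp add: field_simps)
    have h: "mu + 1 - (4*mu+6)*y = 0" unfolding y_def using mu by (simp add: field_simps)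
    have e1: "2*mu*y - 4*mu*(2*y)*y - 2*(2*y)^2 - 2*(2*y)*y + 2*y = 2*y*(mu + 1 - (4*mu+6)*y)"
      by (simp add: algebra_simps power2_eq_square)
    have e2: "mu*y - 4*mu*y^2 - 2*(2*y)*y - 2*y^2 + y = y*(mu + 1 - (4*mu+6)*y)"
      by (simp add: algebra_simps power2_eq_square)
    show ?thesis unfolding crack_field_def x y_def[symmetric] using e1 e2 h by simp
  qed
  show "\<And>p. p \<in> quadQ \<Longrightarrow> crack_field mu lam p = (0, 0) \<Longrightarrow> p = ((mu+1)/(2*mu+3), (mu+1)/(4*mu+6))"
    using uniq[OF mu lam] by blast
  show "snd ((mu+1)/(2*mu+3), (mu+1)/(4*mu+6)) = fst ((mu+1)/(2*mu+3), (mu+1)/(4*mu+6)) / 2"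
    using mu by (simp add: field_simps)
  show "\<And>p. p \<in> quadQ \<Longrightarrow> \<exists>phi. is_solution mu lam phi \<and> phi 0 = p"
    using existence[OF mu lam] by blast
  show "\<And>phi. is_solution mu lam phi \<and> phi 0 \<in> quadQ \<Longrightarrow> (phi \<longlongrightarrow> ((mu+1)/(2*mu+3), (mu+1)/(4*mu+6))) at_top"
    using convergence[OF mu lam] by blast
next
  show "bij_betw (\<lambda>mu. ((mu+1)/(2*mu+3), (mu+1)/(4*mu+6))) {0<..} edge1_interior"
    unfolding bij_betw_def
  proof
    show "inj_on (\<lambda>mu::real. ((mu+1)/(2*mu+3), (mu+1)/(4*mu+6))) {0<..}"
      by (rule inj_onI) (auto simp: field_simps)
    show "(\<lambda>mu. ((mu+1)/(2*mu+3), (mu+1)/(4*mu+6))) ` {0<..} = edge1_interior"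
    proof
      show "(\<lambda>mu. ((mu+1)/(2*mu+3), (mu+1)/(4*mu+6))) ` {0<..} \<subseteq> edge1_interior"
        unfolding edge1_interior_def by (auto simp: field_simps)
      show "edge1_interior \<subseteq> (\<lambda>mu. ((mu+1)/(2*mu+3), (mu+1)/(4*mu+6))) ` {0<..}"
      proof
        fix p assume "p \<in> edge1_interior"
        then obtain a b where ab: "p = (a, b)" "b = a/2" "1/3 < a" "a < 1/2"
          unfolding edge1_interior_def by auto
        define m where "m = (3*a - 1)/(1 - 2*a)"
        have m0: "m > 0" unfolding m_def using ab by simp
        have "((m+1)/(2*m+3), (m+1)/(4*m+6)) = p"
          unfolding ab m_def using ab by (simp add: field_simps)
        then show "p \<in> (\<lambda>mu. ((mu+1)/(2*mu+3), (mu+1)/(4*mu+6))) ` {0<..}"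
          using m0 by force
      qed
    qed
  qed
next
  show "strict_mono_on {0<..} (\<lambda>mu::real. fst ((mu+1)/(2*mu+3), (mu+1)/(4*mu+6)))"
    unfolding strict_mono_on_def by (auto simp: field_simps)
  show "strict_mono_on {0<..} (\<lambda>mu::real. snd ((mu+1)/(2*mu+3), (mu+1)/(4*mu+6)))"
    unfolding strict_mono_on_def by (auto simp: field_simps)
next
  have "((\<lambda>mu::real. ((mu+1)/(2*mu+3), (mu+1)/(4*mu+6))) \<longlongrightarrow> ((0+1)/(2*0+3), (0+1)/(4*0+6))) (at_right 0)"
    by (intro tendsto_intros) auto
  then show "((\<lambda>mu::real. ((mu+1)/(2*mu+3), (mu+1)/(4*mu+6))) \<longlongrightarrow> (1/3, 1/6)) (at_right 0)"
    by simp
next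
  have "((\<lambda>mu::real. (mu+1)/(2*mu+3)) \<longlongrightarrow> 1/2) at_top" by real_asymp
  moreover have "((\<lambda>mu::real. (mu+1)/(4*mu+6)) \<longlongrightarrow> 1/4) at_top" by real_asymp
  ultimately show "((\<lambda>mu::real. ((mu+1)/(2*mu+3), (mu+1)/(4*mu+6))) \<longlongrightarrow> (1/2, 1/4)) at_top"
    by (rule tendsto_Pair)
qed

end
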